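(* Let $d\geq 3$ and let $G=(V,E)$ be a graph on $n$ vertices that is not $M$-independent in $\mathbb{R}^{d-2}$. Then there is a generic configuration $p=(p^{(1)}_v,\dots,p^{(d)}_v)_{v\in V}\in\mathbb{C}^{nd}$ such that the infinitesimal rotation $\varphi=\varphi(p)$ of $(G,p)$ given by $\varphi_v=(-p^{(d)}_v,0,\dots,0,p^{(1)}_v)$ for all $v\in V$ is not in the subspace $W(G,p)\subseteq\mathbb{C}^{nd}$ spanned by $W_1(G,p)\cup W_2(G,p)$. In particular, $W(G,p)$ is a proper subspace of the space of infinitesimal motions of $(G,p)$.
   Context: For a framework $(G,p)$ with $p:V\to\mathbb{C}^d$, the rigidity matrix $R(G,p)$ is the $|E|\times d|V|$ matrix whose row for edge $uv$ has $p(u)-p(v)$ in the $d$ columns of $u$, $p(v)-p(u)$ in the columns of $v$, and zeros elsewhere. The infinitesimal motions of $(G,p)$ are the elements of $\ker R(G,p)\subseteq\mathbb{C}^{nd}$. $W_1(G,p)$ is the set of infinitesimal motions of the form $(q_v,0)_{v\in V}$ with $q_v\in\mathbb{C}^{d-1}$ (supported on the first $d-1$ coordinates), and $W_2(G,p)$ the set of those of the form $(0,q_v)_{v\in V}$ (supported on the last $d-1$ coordinates). A configuration is generic if its coordinates are algebraically independent over $\mathbb{Q}$. $G$ is $M$-independent in $\mathbb{R}^k$ if the rows of $R(G,p)$ are linearly independent for generic $p:V\to\mathbb{R}^k$. *)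

theory Defs
  imports Complex_Main
begin

definition graph :: "'v set \<Rightarrow> 'v set set \<Rightarrow> bool" where
  "graph V E \<longleftrightarrow> finite V \<and>
     E \<subseteq> {e. \<exists>u w. u \<in> V \<and> w \<in> V \<and> u \<noteq> w \<and> e = {u, w}}"

text \<open>A polynomial is a finitely supported coefficient function on monomials (exponent vectors).\<close>
definition alg_indep_Q :: "('i \<Rightarrow> 'a::field_char_0) \<Rightarrow> 'i set \<Rightarrow> bool" where
  "alg_indep_Q x I \<longleftrightarrow>
     (\<forall>c :: ('i \<Rightarrow> nat) \<Rightarrow> rat.
        finite {m. c m \<noteq> 0} \<longrightarrow>
        (\<forall>m. c m \<noteq> 0 \<longrightarrow> (\<forall>i. i \<notin> I \<longrightarrow> m i = 0)) \<longrightarrow>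
        (\<Sum>m\<in>{m. c m \<noteq> 0}. of_rat (c m) * (\<Prod>i\<in>I. x i ^ m i)) = 0 \<longrightarrow>
        (\<forall>m. c m = 0))"

definition generic :: "'v set \<Rightarrow> nat \<Rightarrow> ('v \<Rightarrow> nat \<Rightarrow> 'a::field_char_0) \<Rightarrow> bool" where
  "generic V d p \<longleftrightarrow> alg_indep_Q (\<lambda>(v, k). p v k) (V \<times> {..<d})"

definition rig_entry :: "('v \<Rightarrow> nat \<Rightarrow> 'a::ab_group_add) \<Rightarrow> 'v set \<Rightarrow> 'v \<Rightarrow> nat \<Rightarrow> 'a" where
  "rig_entry p e v j = (if v \<in> e then p v j - p (THE w. w \<in> e \<and> w \<noteq> v) j else 0)"

definition rows_independent :: "'v set \<Rightarrow> 'v set set \<Rightarrow> nat \<Rightarrow> ('v \<Rightarrow> nat \<Rightarrow> real) \<Rightarrow> bool" where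
  "rows_independent V E k p \<longleftrightarrow>
     (\<forall>lam :: 'v set \<Rightarrow> real.
        (\<forall>v\<in>V. \<forall>j<k. (\<Sum>e\<in>E. lam e * rig_entry p e v j) = 0) \<longrightarrow> (\<forall>e\<in>E. lam e = 0))"

definition M_independent :: "'v set \<Rightarrow> 'v set set \<Rightarrow> nat \<Rightarrow> bool" where
  "M_independent V E k \<longleftrightarrow>
     (\<forall>p :: 'v \<Rightarrow> nat \<Rightarrow> real. generic V k p \<longrightarrow> rows_independent V E k p)"

definition inf_motions :: "'v set \<Rightarrow> 'v set set \<Rightarrow> nat \<Rightarrow> ('v \<Rightarrow> nat \<Rightarrow> complex)
    \<Rightarrow> ('v \<Rightarrow> nat \<Rightarrow> complex) set" where
  "inf_motions V E d p = {q. (\<forall>v k. (v \<notin> V \<or> k \<ge> d) \<longrightarrow> q v k = 0) \<and>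
      (\<forall>e\<in>E. (\<Sum>v\<in>V. \<Sum>j<d. rig_entry p e v j * q v j) = 0)}"

definition W1 where
  "W1 V E d p = {q \<in> inf_motions V E d p. \<forall>v. q v (d - 1) = 0}"

definition W2 where
  "W2 V E d p = {q \<in> inf_motions V E d p. \<forall>v. q v 0 = 0}"

definition cspan :: "('v \<Rightarrow> nat \<Rightarrow> complex) set \<Rightarrow> ('v \<Rightarrow> nat \<Rightarrow> complex) set" where
  "cspan S = {x. \<exists>F c. finite F \<and> F \<subseteq> S \<and>
                   (\<forall>v k. x v k = (\<Sum>y\<in>F. c y * y v k))}"

definition W where
  "W V E d p = cspan (W1 V E d p \<union> W2 V E d p)"

definition rot :: "'v set \<Rightarrow> nat \<Rightarrow> ('v \<Rightarrow> nat \<Rightarrow> complex) \<Rightarrow> 'v \<Rightarrow> nat \<Rightarrow> complex" where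
  "rot V d p v k = (if v \<in> V \<and> k = 0 then - p v (d - 1)
                   else if v \<in> V \<and> k = d - 1 then p v 0 else 0)"

end

theory Submission imports Defs "HOL-Analysis.Continuum_Not_Denumerable" "HOL-Computational_Algebra.Polynomial" begin

lemma of_real_of_rat_c: "complex_of_real (of_rat r) = of_rat r"
  by (cases r) (simp add: of_rat_rat)  

lemma alg_indep_of_real:
  assumes "alg_indep_Q (x::'i\<Rightarrow>real) I"
  shows "alg_indep_Q (\<lambda>i. complex_of_real (x i)) I"
  unfolding alg_indep_Q_def
proof (rule allI, intro impI)
  fix c :: "('i \<Rightarrow> nat) \<Rightarrow> rat"
  assume f: "finite {m. c m \<noteq> 0}" and s: "\<forall>m. c m \<noteq> 0 \<longrightarrow> (\<forall>i. i \<notin> I \<longrightarrow> m i = 0)"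
    and z: "(\<Sum>m\<in>{m. c m \<noteq> 0}. of_rat (c m) * (\<Prod>i\<in>I. complex_of_real (x i) ^ m i)) = 0"
  have eq: "(\<Sum>m\<in>{m. c m \<noteq> 0}. of_rat (c m) * (\<Prod>i\<in>I. complex_of_real (x i) ^ m i))
     = complex_of_real (\<Sum>m\<in>{m. c m \<noteq> 0}. of_rat (c m) * (\<Prod>i\<in>I. x i ^ m i))"
    by (simp add: of_real_of_rat_c[symmetric])
  have "(\<Sum>m\<in>{m. c m \<noteq> 0}. of_rat (c m) * (\<Prod>i\<in>I. x i ^ m i)) = 0"
    using z eq by (metis of_real_eq_0_iff)
  with assms f s show "\<forall>m. c m = 0" unfolding alg_indep_Q_def by blast
qed
lemma alg_indep_reindex:
  fixes y :: "'j \<Rightarrow> 'a::field_char_0" and x :: "'i \<Rightarrow> 'a"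
  assumes ind: "alg_indep_Q y J" and bij: "bij_betw h I J" and xy: "\<forall>i\<in>I. x i = y (h i)"
  shows "alg_indep_Q x I"
  unfolding alg_indep_Q_def
proof (rule allI, intro impI)
  fix c :: "('i \<Rightarrow> nat) \<Rightarrow> rat"
  assume f: "finite {m. c m \<noteq> 0}" and s: "\<forall>m. c m \<noteq> 0 \<longrightarrow> (\<forall>i. i \<notin> I \<longrightarrow> m i = 0)"
    and z: "(\<Sum>m\<in>{m. c m \<noteq> 0}. of_rat (c m) * (\<Prod>i\<in>I. x i ^ m i)) = 0"
  define g where "g = the_inv_into I h"
  have gh: "\<And>i. i \<in> I \<Longrightarrow> g (h i) = i" unfolding g_def
    using bij by (simp add: bij_betw_def the_inv_into_f_f)
  have hg: "\<And>j. j \<in> J \<Longrightarrow> h (g j) = j \<and> g j \<in> I" unfolding g_def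
    using bij bij_betw_the_inv_into[OF bij] f_the_inv_into_f_bij_betw bij_betw_apply by metis
  have hI: "\<And>i. i \<in> I \<Longrightarrow> h i \<in> J" using bij by (simp add: bij_betw_def image_iff) (blast)
  define \<phi> where "\<phi> m = (\<lambda>j. if j \<in> J then m (g j) else 0::nat)" for m :: "'i \<Rightarrow> nat"
  define \<psi> where "\<psi> m' = (\<lambda>i. if i \<in> I then m' (h i) else 0::nat)" for m' :: "'j \<Rightarrow> nat"
  define c' where "c' m' = (if (\<forall>j. j \<notin> J \<longrightarrow> m' j = 0) then c (\<psi> m') else 0)" for m'
  have a: "\<psi> (\<phi> m) = m" if "\<forall>i. i \<notin> I \<longrightarrow> m i = 0" for m
    using that by (auto simp: \<psi>_def \<phi>_def fun_eq_iff gh hI)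
  have b: "\<phi> (\<psi> m') = m'" if "\<forall>j. j \<notin> J \<longrightarrow> m' j = 0" for m'
    using that hg by (auto simp: \<psi>_def \<phi>_def fun_eq_iff)
  have phiJ: "\<forall>j. j \<notin> J \<longrightarrow> \<phi> m j = 0" for m by (simp add: \<phi>_def)
  have c'phi: "c' (\<phi> m) = c m" if "c m \<noteq> 0" for m
    using a[of m] s that phiJ[of m] by (simp add: c'_def)
  have supp: "{m'. c' m' \<noteq> 0} = \<phi> ` {m. c m \<noteq> 0}"
  proof (intro equalityI subsetI)
    fix m' assume "m' \<in> {m'. c' m' \<noteq> 0}"
    then have J: "\<forall>j. j \<notin> J \<longrightarrow> m' j = 0" and "c (\<psi> m') \<noteq> 0" by (auto simp: c'_def split: if_splits)
    then show "m' \<in> \<phi> ` {m. c m \<noteq> 0}" using b[OF J] by (metis (mono_tags, lifting) image_eqI mem_Collect_eq)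
  next
    fix m' assume "m' \<in> \<phi> ` {m. c m \<noteq> 0}"
    then show "m' \<in> {m'. c' m' \<noteq> 0}" using c'phi by auto
  qed
  have inj: "inj_on \<phi> {m. c m \<noteq> 0}"
    by (rule inj_on_inverseI[where g = \<psi>]) (use a s in auto)
  have "(\<Sum>m'\<in>{m'. c' m' \<noteq> 0}. of_rat (c' m') * (\<Prod>j\<in>J. y j ^ m' j))
      = (\<Sum>m\<in>{m. c m \<noteq> 0}. of_rat (c' (\<phi> m)) * (\<Prod>j\<in>J. y j ^ \<phi> m j))"
    unfolding supp by (rule sum.reindex[OF inj, unfolded comp_def])
  also have "\<dots> = (\<Sum>m\<in>{m. c m \<noteq> 0}. of_rat (c m) * (\<Prod>i\<in>I. x i ^ m i))"
  proof (rule sum.cong[OF refl])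
    fix m assume m: "m \<in> {m. c m \<noteq> 0}"
    have "(\<Prod>j\<in>J. y j ^ \<phi> m j) = (\<Prod>i\<in>I. y (h i) ^ \<phi> m (h i))"
      by (rule prod.reindex_bij_betw[OF bij, symmetric])
    also have "\<dots> = (\<Prod>i\<in>I. x i ^ m i)"
      by (rule prod.cong[OF refl]) (simp add: xy \<phi>_def gh hI)
    finally show "of_rat (c' (\<phi> m)) * (\<Prod>j\<in>J. y j ^ \<phi> m j) = of_rat (c m) * (\<Prod>i\<in>I. x i ^ m i)"
      using c'phi m by simp
  qed
  finally have z': "(\<Sum>m'\<in>{m'. c' m' \<noteq> 0}. of_rat (c' m') * (\<Prod>j\<in>J. y j ^ m' j)) = 0" using z by simp
  have f': "finite {m'. c' m' \<noteq> 0}" unfolding supp using f by simp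
  have s': "\<forall>m'. c' m' \<noteq> 0 \<longrightarrow> (\<forall>j. j \<notin> J \<longrightarrow> m' j = 0)" by (simp add: c'_def)
  have all0: "\<forall>m'. c' m' = 0" using ind f' s' z' unfolding alg_indep_Q_def by blast
  show "\<forall>m. c m = 0"
  proof (rule ccontr)
    assume "\<not> (\<forall>m. c m = 0)"
    then obtain m where "c m \<noteq> 0" by blast
    then show False using c'phi[of m] all0 by simp
  qed
qed

definition polyvals :: "('i \<Rightarrow> 'a::field_char_0) \<Rightarrow> 'i set \<Rightarrow> 'a set" where
  "polyvals x I = {s. \<exists>c. finite {m. c m \<noteq> 0} \<and> (\<forall>m. c m \<noteq> 0 \<longrightarrow> (\<forall>i. i \<notin> I \<longrightarrow> m i = 0)) \<and>
      s = (\<Sum>m\<in>{m. c m \<noteq> 0}. of_rat (c m) * (\<Prod>i\<in>I. x i ^ m i))}"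

lemma countable_polyvals:
  assumes "finite I"
  shows "countable (polyvals x I)"
proof -
  obtain ixs where ixs: "set ixs = I" "distinct ixs" using assms finite_distinct_list by blast
  define ev where "ev ps = sum_list (map (\<lambda>(ms, r). of_rat r * prod_list (map (\<lambda>(i, e). x i ^ e) (zip ixs ms))) ps)"
    for ps :: "(nat list \<times> rat) list"
  have "polyvals x I \<subseteq> range ev"
  proof
    fix s assume "s \<in> polyvals x I"
    then obtain c where f: "finite {m. c m \<noteq> 0}"
      and s: "s = (\<Sum>m\<in>{m. c m \<noteq> 0}. of_rat (c m) * (\<Prod>i\<in>I. x i ^ m i))"
      unfolding polyvals_def by blast
    obtain L where L: "set L = {m. c m \<noteq> 0}" "distinct L" using f finite_distinct_list by blast
    have "s = sum_list (map (\<lambda>m. of_rat (c m) * (\<Prod>i\<in>I. x i ^ m i)) L)"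
      unfolding s L(1)[symmetric] using L(2) by (simp add: sum_list_distinct_conv_sum_set)
    also have "\<dots> = ev (map (\<lambda>m. (map m ixs, c m)) L)"
      unfolding ev_def ixs(1)[symmetric]
      by (simp add: o_def zip_map2 zip_same_conv_map prod.distinct_set_conv_list[OF ixs(2)])
    finally show "s \<in> range ev" by blast
  qed
  then show ?thesis by (rule countable_subset) simp
qed

lemma poly_Poly_sum: "poly (Poly as) (t::complex) = (\<Sum>k<length as. as ! k * t ^ k)"
proof (induction as)
  case Nil
  then show ?case by simp
next
  case (Cons a as)
  have "(\<Sum>k<length (a # as). (a # as) ! k * t ^ k) = a + (\<Sum>k<length as. as ! k * t ^ Suc k)"
    by (simp only: length_Cons sum.lessThan_Suc_shift) simp
  also have "\<dots> = a + t * (\<Sum>k<length as. as ! k * t ^ k)"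
    by (simp add: sum_distrib_left mult.left_commute)
  finally show ?case using Cons by simp
qed

lemma ext1:
  fixes x :: "'i \<Rightarrow> complex"
  assumes fin: "finite I" and j: "j \<notin> I" and ind: "alg_indep_Q x I" and Z: "countable Z"
  shows "\<exists>t. t \<notin> Z \<and> alg_indep_Q (x(j:=t)) (insert j I)"
proof -
  define A where "A = polyvals x I"
  have cA: "countable A" unfolding A_def by (rule countable_polyvals[OF fin])
  define Bad where "Bad = (\<Union>as\<in>{as \<in> lists A. Poly as \<noteq> 0}. {t. poly (Poly as) t = 0})"
  have cBad: "countable Bad" unfolding Bad_def
    by (rule countable_UN) (auto intro: countable_subset[OF _ countable_lists[OF cA]]
        countable_finite poly_roots_finite)
  have "\<not> UNIV \<subseteq> Bad \<union> Z"
    using cBad Z uncountable_UNIV_complex countable_Un countable_subset by blast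
  then obtain t where t: "t \<notin> Bad" "t \<notin> Z" by blast
  have "alg_indep_Q (x(j:=t)) (insert j I)"
    unfolding alg_indep_Q_def
  proof (rule allI, intro impI)
    fix c :: "('i \<Rightarrow> nat) \<Rightarrow> rat"
    assume f: "finite {m. c m \<noteq> 0}" and s: "\<forall>m. c m \<noteq> 0 \<longrightarrow> (\<forall>i. i \<notin> insert j I \<longrightarrow> m i = 0)"
      and z: "(\<Sum>m\<in>{m. c m \<noteq> 0}. of_rat (c m) * (\<Prod>i\<in>insert j I. (x(j:=t)) i ^ m i)) = 0"
    define S where "S = {m. c m \<noteq> 0}"
    define P where "P m = (\<Prod>i\<in>I. x i ^ m i)" for m :: "'i \<Rightarrow> nat"
    have Pins: "(\<Prod>i\<in>insert j I. (x(j:=t)) i ^ m i) = t ^ m j * P m" for m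
    proof -
      have "(\<Prod>i\<in>insert j I. (x(j:=t)) i ^ m i) = t ^ m j * (\<Prod>i\<in>I. (x(j:=t)) i ^ m i)"
        using fin j by simp
      also have "(\<Prod>i\<in>I. (x(j:=t)) i ^ m i) = P m"
        unfolding P_def by (rule prod.cong) (use j in auto)
      finally show ?thesis .
    qed
    have P0: "P (m(j:=k)) = P m" for m k
      unfolding P_def by (rule prod.cong) (use j in auto)
    define K where "K = Max (insert 0 ((\<lambda>m. m j) ` S))"
    have fS: "finite S" using f S_def by simp
    have K: "m j \<le> K" if "m \<in> S" for m
      unfolding K_def using fS that by (intro Max_ge) auto
    define ck where "ck k m = (if m j = 0 then c (m(j:=k)) else 0)" for k m
    define a where "a k = (\<Sum>m\<in>{m. ck k m \<noteq> 0}. of_rat (ck k m) * P m)" for k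
    have suppck: "{m. ck k m \<noteq> 0} = (\<lambda>m. m(j:=0)) ` {m\<in>S. m j = k}" for k
    proof (intro equalityI subsetI)
      fix m assume "m \<in> {m. ck k m \<noteq> 0}"
      then have "m j = 0" "c (m(j:=k)) \<noteq> 0" by (auto simp: ck_def split: if_splits)
      then show "m \<in> (\<lambda>m. m(j:=0)) ` {m\<in>S. m j = k}"
        by (intro image_eqI[of _ _ "m(j:=k)"]) (auto simp: S_def)
    next
      fix m assume "m \<in> (\<lambda>m. m(j:=0)) ` {m\<in>S. m j = k}"
      then obtain m0 where "m0 \<in> S" "m0 j = k" "m = m0(j:=0)" by blast
      moreover have "m0(j:=0, j:=k) = m0" using \<open>m0 j = k\<close> by auto
      ultimately show "m \<in> {m. ck k m \<noteq> 0}" by (simp add: ck_def S_def)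
    qed
    have fck: "finite {m. ck k m \<noteq> 0}" for k unfolding suppck using fS by simp
    have sck: "\<forall>m. ck k m \<noteq> 0 \<longrightarrow> (\<forall>i. i \<notin> I \<longrightarrow> m i = 0)" for k
    proof (intro allI impI)
      fix m i assume "ck k m \<noteq> 0" "i \<notin> I"
      then have "m j = 0" "c (m(j:=k)) \<noteq> 0" by (auto simp: ck_def split: if_splits)
      then show "m i = 0" using s \<open>i \<notin> I\<close> by (cases "i = j") (auto dest!: spec[of _ "m(j:=k)"])
    qed
    have aA: "a k \<in> A" for k unfolding A_def polyvals_def a_def P_def using fck sck by blast
    have a_eq: "a k = (\<Sum>m\<in>{m\<in>S. m j = k}. of_rat (c m) * P m)" for k
    proof -
      have inj: "inj_on (\<lambda>m. m(j:=0)) {m\<in>S. m j = k}"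
        by (rule inj_on_inverseI[where g = "\<lambda>m. m(j:=k)"]) auto
      have "a k = (\<Sum>m\<in>{m\<in>S. m j = k}. of_rat (ck k (m(j:=0))) * P (m(j:=0)))"
        unfolding a_def suppck by (rule sum.reindex[OF inj, unfolded comp_def])
      also have "\<dots> = (\<Sum>m\<in>{m\<in>S. m j = k}. of_rat (c m) * P m)"
      proof (rule sum.cong[OF refl])
        fix m assume m: "m \<in> {m\<in>S. m j = k}"
        then have "m(j:=0, j:=k) = m" by auto
        then show "of_rat (ck k (m(j:=0))) * P (m(j:=0)) = of_rat (c m) * P m"
          by (simp add: ck_def P0)
      qed
      finally show ?thesis .
    qed
    have "(\<Sum>k\<le>K. a k * t ^ k) = (\<Sum>k\<le>K. (\<Sum>m\<in>{m\<in>S. m j = k}. of_rat (c m) * P m * t ^ m j))"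
      by (rule sum.cong[OF refl]) (simp add: a_eq sum_distrib_right)
    also have "\<dots> = (\<Sum>m\<in>S. of_rat (c m) * P m * t ^ m j)"
      by (rule sum.group) (use fS K in auto)
    also have "\<dots> = 0" using z unfolding S_def[symmetric] Pins by (simp add: algebra_simps)
    finally have sum0: "(\<Sum>k\<le>K. a k * t ^ k) = 0" .
    define as where "as = map a [0..<Suc K]"
    have "poly (Poly as) t = (\<Sum>k<Suc K. a k * t ^ k)"
      unfolding poly_Poly_sum as_def by (intro sum.cong) (simp_all del: upt_Suc)
    also have "\<dots> = 0" using sum0 by (simp add: lessThan_Suc_atMost)
    finally have "poly (Poly as) t = 0" .
    moreover have "as \<in> lists A" unfolding as_def using aA by auto
    ultimately have "Poly as = 0" using t(1) unfolding Bad_def by blast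
    then obtain n where "as = replicate n 0" by (auto simp: Poly_eq_0)
    then have ak0: "a k = 0" if "k \<le> K" for k
      using that unfolding as_def
      by (metis (no_types) in_set_replicate le_imp_less_Suc atLeastLessThan_iff image_eqI set_map set_upt zero_le)
    have ck0: "ck k m = 0" if "k \<le> K" for k m
      using ind fck sck ak0[OF that] unfolding alg_indep_Q_def a_def P_def by blast
    show "\<forall>m. c m = 0"
    proof (rule ccontr)
      assume "\<not> (\<forall>m. c m = 0)"
      then obtain m where m: "c m \<noteq> 0" by blast
      then have "m \<in> S" by (simp add: S_def)
      then have "m j \<le> K" by (rule K)
      moreover have "m(j:=0, j:= m j) = m" by auto
      ultimately show False using ck0[of "m j" "m(j:=0)"] m by (simp add: ck_def)
    qed
  qed
  with t(2) show ?thesis by blast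
qed

lemma ext_many:
  fixes x :: "'i \<Rightarrow> complex"
  assumes "finite J" "finite I" "I \<inter> J = {}" "alg_indep_Q x I"
  shows "\<exists>x'. (\<forall>i. i \<notin> J \<longrightarrow> x' i = x i) \<and> alg_indep_Q x' (I \<union> J)"
  using assms
proof (induction J rule: finite_induct)
  case empty
  then show ?case by auto
next
  case (insert j J)
  then obtain x' where x': "\<forall>i. i \<notin> J \<longrightarrow> x' i = x i" "alg_indep_Q x' (I \<union> J)" by auto
  have "j \<notin> I \<union> J" using insert by auto
  from ext1[OF _ this x'(2), of "{}"] insert obtain t where "alg_indep_Q (x'(j:=t)) (insert j (I \<union> J))"
    by auto
  moreover have "\<forall>i. i \<notin> insert j J \<longrightarrow> (x'(j:=t)) i = x i" using x' by auto
  ultimately show ?case by (metis Un_insert_right)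
qed

lemma the_other: "u \<noteq> w \<Longrightarrow> (THE z. z \<in> {u, w} \<and> z \<noteq> u) = w"
  by (rule the_equality) auto

lemma edge_other:
  assumes "graph V E" "e \<in> E" "a \<in> e"
  shows "\<exists>ow. e = {a, ow} \<and> ow \<noteq> a \<and> ow \<in> V \<and> a \<in> V"
  using assms unfolding graph_def by (auto simp: insert_commute)

lemma graph_finite_E: "graph V E \<Longrightarrow> finite E"
  unfolding graph_def by (rule finite_subset[of _ "Pow V"]) auto

lemma Kdiff:
  fixes q q' :: "'v \<Rightarrow> nat \<Rightarrow> complex" and lam :: "'v set \<Rightarrow> complex"
  assumes G: "graph V E" and e0: "{a, b} \<in> E" "a \<noteq> b"
    and qq: "\<forall>v. v \<noteq> b \<longrightarrow> q' v 0 = q v 0"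
  shows "(\<Sum>e\<in>E. lam e * rig_entry q' e a 0) =
         (\<Sum>e\<in>E. lam e * rig_entry q e a 0) - lam {a, b} * (q' b 0 - q b 0)"
proof -
  have fE: "finite E" using G by (rule graph_finite_E)
  have tm: "lam e * rig_entry q' e a 0 = lam e * rig_entry q e a 0 -
      (if e = {a, b} then lam {a, b} * (q' b 0 - q b 0) else 0)" if e: "e \<in> E" for e
  proof (cases "a \<in> e")
    case False
    then have "e \<noteq> {a, b}" by auto
    with False show ?thesis by (simp add: rig_entry_def)
  next
    case True
    then obtain ow where ow: "e = {a, ow}" "ow \<noteq> a" using edge_other[OF G e] by blast
    have th: "(THE w. w \<in> e \<and> w \<noteq> a) = ow" using ow the_other by metis
    show ?thesis
    proof (cases "ow = b")
      case True
      then show ?thesis using ow th e0 qq by (simp add: rig_entry_def algebra_simps)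
    next
      case False
      then have "e \<noteq> {a, b}" using ow e0 by (auto simp: doubleton_eq_iff)
      then show ?thesis using ow th e0 qq False by (simp add: rig_entry_def)
    qed
  qed
  have "(\<Sum>e\<in>E. lam e * rig_entry q' e a 0) = (\<Sum>e\<in>E. lam e * rig_entry q e a 0 -
      (if e = {a, b} then lam {a, b} * (q' b 0 - q b 0) else 0))"
    by (rule sum.cong) (use tm in auto)
  also have "\<dots> = (\<Sum>e\<in>E. lam e * rig_entry q e a 0) - lam {a, b} * (q' b 0 - q b 0)"
    using fE e0 by (simp add: sum_subtractf)
  finally show ?thesis .
qed

lemma Sdiff:
  fixes x x' :: "'v \<times> nat \<Rightarrow> complex" and lam :: "'v set \<Rightarrow> complex"
  assumes fV: "finite V" and a: "a \<in> V" and n: "n \<noteq> 0" and xx: "\<forall>i. i \<noteq> (a, n) \<longrightarrow> x' i = x i"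
  shows "(\<Sum>v\<in>V. x' (v, n) * (\<Sum>e\<in>E. lam e * rig_entry (\<lambda>v k. x' (v, k)) e v 0)) =
    (\<Sum>v\<in>V. x (v, n) * (\<Sum>e\<in>E. lam e * rig_entry (\<lambda>v k. x (v, k)) e v 0)) +
    (x' (a, n) - x (a, n)) * (\<Sum>e\<in>E. lam e * rig_entry (\<lambda>v k. x (v, k)) e a 0)"
proof -
  have r: "rig_entry (\<lambda>v k. x' (v, k)) e v 0 = rig_entry (\<lambda>v k. x (v, k)) e v 0" for e v
    unfolding rig_entry_def using xx n by auto
  define K where "K v = (\<Sum>e\<in>E. lam e * rig_entry (\<lambda>v k. x (v, k)) e v 0)" for v
  have "(\<Sum>v\<in>V. x' (v, n) * K v) = (\<Sum>v\<in>V. x (v, n) * K v + (if v = a then (x' (a, n) - x (a, n)) * K a else 0))"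
    by (rule sum.cong) (use xx in \<open>auto simp: algebra_simps\<close>)
  also have "\<dots> = (\<Sum>v\<in>V. x (v, n) * K v) + (x' (a, n) - x (a, n)) * K a"
    using fV a by (simp add: sum.distrib)
  finally show ?thesis unfolding K_def r .
qed

lemma lincomb_motion:
  assumes "finite F" "F \<subseteq> inf_motions V E d p"
  shows "(\<lambda>v k. \<Sum>y\<in>F. c y * y v k) \<in> inf_motions V E d p"
proof -
  have z: "\<forall>y\<in>F. \<forall>v k. (v \<notin> V \<or> k \<ge> d) \<longrightarrow> y v k = 0" using assms(2) by (auto simp: inf_motions_def)
  have k: "\<forall>y\<in>F. \<forall>e\<in>E. (\<Sum>v\<in>V. \<Sum>j<d. rig_entry p e v j * y v j) = 0" using assms(2) by (auto simp: inf_motions_def)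
  have "(\<Sum>v\<in>V. \<Sum>j<d. rig_entry p e v j * (\<Sum>y\<in>F. c y * y v j)) = 0" if e: "e \<in> E" for e
  proof -
    have "(\<Sum>v\<in>V. \<Sum>j<d. rig_entry p e v j * (\<Sum>y\<in>F. c y * y v j))
        = (\<Sum>y\<in>F. c y * (\<Sum>v\<in>V. \<Sum>j<d. rig_entry p e v j * y v j))"
      by (simp add: sum_distrib_left sum.swap[of _ F] algebra_simps)
    also have "\<dots> = 0" using k e by simp
    finally show ?thesis .
  qed
  then show ?thesis using z by (auto simp: inf_motions_def intro!: sum.neutral)
qed

lemma rot_motion:
  fixes p :: "'v \<Rightarrow> nat \<Rightarrow> complex"
  assumes G: "graph V E" and d3: "d \<ge> 3"
  shows "rot V d p \<in> inf_motions V E d p"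
proof -
  have z: "\<forall>v k. (v \<notin> V \<or> k \<ge> d) \<longrightarrow> rot V d p v k = 0" using d3 by (auto simp: rot_def)
  have fV: "finite V" using G by (simp add: graph_def)
  have "(\<Sum>v\<in>V. \<Sum>j<d. rig_entry p e v j * rot V d p v j) = 0" if e: "e \<in> E" for e
  proof -
    obtain u w where uw: "e = {u, w}" "u \<in> V" "w \<in> V" "u \<noteq> w" using G e unfolding graph_def by blast
    define g where "g v = rig_entry p e v 0 * (- p v (d-1)) + rig_entry p e v (d-1) * p v 0" for v
    have inner: "(\<Sum>j<d. rig_entry p e v j * rot V d p v j) = g v" if v: "v \<in> V" for v
    proof -
      have "(\<Sum>j<d. rig_entry p e v j * rot V d p v j) = (\<Sum>j\<in>{0, d-1}. rig_entry p e v j * rot V d p v j)"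
        by (rule sum.mono_neutral_right) (use d3 in \<open>auto simp: rot_def\<close>)
      also have "\<dots> = g v" using d3 v by (simp add: g_def rot_def)
      finally show ?thesis .
    qed
    have "(\<Sum>v\<in>V. \<Sum>j<d. rig_entry p e v j * rot V d p v j) = (\<Sum>v\<in>V. g v)"
      by (rule sum.cong) (use inner in auto)
    also have "\<dots> = (\<Sum>v\<in>{u, w}. g v)"
      by (rule sum.mono_neutral_right) (use fV uw in \<open>simp_all add: g_def rig_entry_def\<close>)
    also have "\<dots> = g u + g w" using uw by simp
    also have "\<dots> = 0"
    proof -
      have t1: "(THE z. z \<in> e \<and> z \<noteq> u) = w" using uw the_other by metis
      have "e = {w, u}" using uw by auto
      then have t2: "(THE z. z \<in> e \<and> z \<noteq> w) = u" using uw the_other[of w u] by simp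
      show ?thesis unfolding g_def rig_entry_def using t1 t2 uw by (simp add: algebra_simps)
    qed
    finally show ?thesis .
  qed
  then show ?thesis using z by (simp add: inf_motions_def)
qed

lemma W_sub: "W V E d p \<subseteq> inf_motions V E d p"
proof
  fix x assume "x \<in> W V E d p"
  then obtain F c where F: "finite F" "F \<subseteq> W1 V E d p \<union> W2 V E d p"
    "\<forall>v k. x v k = (\<Sum>y\<in>F. c y * y v k)" unfolding W_def cspan_def by blast
  have xe: "x = (\<lambda>v k. \<Sum>y\<in>F. c y * y v k)" using F(3) by (simp add: fun_eq_iff)
  have "F \<subseteq> inf_motions V E d p" using F(2) by (auto simp: W1_def W2_def)
  from lincomb_motion[OF F(1) this, of c] show "x \<in> inf_motions V E d p" unfolding xe .
qed

theorem lemma3p9: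
  fixes V :: "'v set" and E :: "'v set set" and d :: nat
  assumes "d \<ge> 3"
    and "graph V E"
    and "\<not> M_independent V E (d - 2)"
  shows "\<exists>p :: 'v \<Rightarrow> nat \<Rightarrow> complex. generic V d p \<and>
           rot V d p \<in> inf_motions V E d p \<and>
           rot V d p \<notin> W V E d p \<and>
           W V E d p \<subset> inf_motions V E d p"
proof -
  have d3: "d \<ge> 3" and G: "graph V E" using assms by auto
  have fV: "finite V" using G by (simp add: graph_def)
  have fE: "finite E" using G by (rule graph_finite_E)
  obtain p0 :: "'v \<Rightarrow> nat \<Rightarrow> real" where gen0: "generic V (d - 2) p0"
    and nri: "\<not> rows_independent V E (d - 2) p0"
    using assms(3) unfolding M_independent_def by blast
  obtain lam :: "'v set \<Rightarrow> real" and e0 where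
    hl: "\<forall>v\<in>V. \<forall>j<d - 2. (\<Sum>e\<in>E. lam e * rig_entry p0 e v j) = 0" and
    e0: "e0 \<in> E" "lam e0 \<noteq> 0"
    using nri unfolding rows_independent_def by blast
  obtain a b where ab: "e0 = {a, b}" "a \<in> V" "b \<in> V" "a \<noteq> b"
    using G e0(1) unfolding graph_def by blast
  define lamc where "lamc e = complex_of_real (lam e)" for e
  have lam0: "lamc {a, b} \<noteq> 0" using e0 ab by (simp add: lamc_def)
  have eab: "{a, b} \<in> E" using e0 ab by simp
  define I0 where "I0 = V \<times> {1..d-2}"
  define x0 :: "'v \<times> nat \<Rightarrow> complex" where "x0 = (\<lambda>(v, k). complex_of_real (p0 v (k - 1)))"
  have bij: "bij_betw (\<lambda>(v, k). (v, k - 1)) I0 (V \<times> {..<d-2})"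
    unfolding I0_def
    by (rule bij_betw_byWitness[where f' = "\<lambda>(v, k). (v, k + 1)"]) (use d3 in auto)
  have ind0: "alg_indep_Q x0 I0"
    by (rule alg_indep_reindex[OF alg_indep_of_real[OF gen0[unfolded generic_def]] bij])
       (auto simp: x0_def I0_def)
  define J1 where "J1 = (V \<times> {0} \<union> V \<times> {d-1}) - {(b, 0), (a, d-1)}"
  have fI0: "finite I0" unfolding I0_def using fV by simp
  have fJ1: "finite J1" unfolding J1_def using fV by simp
  have dis: "I0 \<inter> J1 = {}" unfolding I0_def J1_def using d3 by auto
  obtain x1 where x1: "\<forall>i. i \<notin> J1 \<longrightarrow> x1 i = x0 i" "alg_indep_Q x1 (I0 \<union> J1)"
    using ext_many[OF fJ1 fI0 dis ind0] by blast
  define Ka where "Ka x = (\<Sum>e\<in>E. lamc e * rig_entry (\<lambda>v k. x (v, k)) e a 0)" for x :: "'v \<times> nat \<Rightarrow> complex"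
  define Sf where "Sf x = (\<Sum>v\<in>V. x (v, d-1) * (\<Sum>e\<in>E. lamc e * rig_entry (\<lambda>v k. x (v, k)) e v 0))"
    for x :: "'v \<times> nat \<Rightarrow> complex"
  have nb: "(b, 0) \<notin> I0 \<union> J1" unfolding I0_def J1_def by auto
  obtain t1 where t1: "t1 \<notin> {Ka (x1((b,0):=0)) / lamc {a, b}}"
    "alg_indep_Q (x1((b,0):=t1)) (insert (b,0) (I0 \<union> J1))"
    using ext1[OF _ nb x1(2), of "{Ka (x1((b,0):=0)) / lamc {a, b}}"] fI0 fJ1 by auto
  define x2 where "x2 = x1((b,0):=t1)"
  have Ka2: "Ka x2 \<noteq> 0"
  proof
    assume "Ka x2 = 0"
    moreover have "Ka x2 = Ka (x1((b,0):=0)) - lamc {a, b} * (x2 (b, 0) - (x1((b,0):=0)) (b, 0))"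
      unfolding Ka_def by (rule Kdiff[OF G eab ab(4)]) (auto simp: x2_def)
    moreover have "x2 (b, 0) - (x1((b,0):=0)) (b, 0) = t1" by (simp add: x2_def)
    ultimately have "t1 = Ka (x1((b,0):=0)) / lamc {a, b}" using lam0 by (simp add: field_simps)
    then show False using t1(1) by simp
  qed
  have na: "(a, d-1) \<notin> insert (b,0) (I0 \<union> J1)" unfolding I0_def J1_def using d3 by auto
  obtain t2 where t2: "t2 \<notin> {- Sf (x2((a,d-1):=0)) / Ka x2}"
    "alg_indep_Q (x2((a,d-1):=t2)) (insert (a,d-1) (insert (b,0) (I0 \<union> J1)))"
    using ext1[OF _ na t1(2)[folded x2_def], of "{- Sf (x2((a,d-1):=0)) / Ka x2}"] fI0 fJ1 by auto
  define x3 where "x3 = x2((a,d-1):=t2)"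
  have d10: "d - 1 \<noteq> 0" using d3 by simp
  have Sf3: "Sf x3 \<noteq> 0"
  proof
    assume "Sf x3 = 0"
    moreover have "Sf x3 = Sf (x2((a,d-1):=0)) + (x3 (a, d-1) - (x2((a,d-1):=0)) (a, d-1)) * Ka (x2((a,d-1):=0))"
      unfolding Sf_def Ka_def by (rule Sdiff[OF fV ab(2) d10]) (auto simp: x3_def)
    moreover have "x3 (a, d-1) - (x2((a,d-1):=0)) (a, d-1) = t2" by (simp add: x3_def)
    moreover have "Ka (x2((a,d-1):=0)) = Ka x2"
    proof -
      have fx: "(x2((a,d-1):=0)) (w, 0) = x2 (w, 0)" for w using d10 by simp
      show ?thesis unfolding Ka_def rig_entry_def fx ..
    qed
    ultimately have "t2 = - Sf (x2((a,d-1):=0)) / Ka x2" using Ka2 by (simp add: field_simps eq_neg_iff_add_eq_0)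
    then show False using t2(1) by simp
  qed
  define p where "p v k = x3 (v, k)" for v k
  have idx: "insert (a,d-1) (insert (b,0) (I0 \<union> J1)) = V \<times> {..<d}"
    unfolding I0_def J1_def using d3 ab by auto
  have gen: "generic V d p"
    unfolding generic_def p_def using t2(2)[folded x3_def] idx by simp
  have mid: "p v k = complex_of_real (p0 v (k - 1))" if "1 \<le> k" "k \<le> d - 2" for v k
  proof -
    have "(v, k) \<notin> J1" "(v, k) \<noteq> (a, d-1)" "(v, k) \<noteq> (b, 0)" unfolding J1_def using that d3 by auto
    then have "p v k = x1 (v, k)" unfolding p_def x3_def x2_def by (metis fun_upd_other)
    then show ?thesis using x1(1) \<open>(v, k) \<notin> J1\<close> by (simp add: x0_def)
  qed
  have pe: "(\<lambda>v k. x3 (v, k)) = p" by (simp add: p_def fun_eq_iff)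
  define L where "L v j = (\<Sum>e\<in>E. lamc e * rig_entry p e v j)" for v j
  have Sfp: "Sf x3 = (\<Sum>v\<in>V. p v (d-1) * L v 0)" unfolding Sf_def pe L_def by (simp add: p_def)
  have Lmid: "L v j = 0" if "v \<in> V" "1 \<le> j" "j \<le> d - 2" for v j
  proof -
    have "rig_entry p e v j = complex_of_real (rig_entry p0 e v (j - 1))" for e
      unfolding rig_entry_def using mid[OF that(2,3)] by simp
    then have "L v j = complex_of_real (\<Sum>e\<in>E. lam e * rig_entry p0 e v (j - 1))"
      by (simp add: L_def lamc_def)
    also have "\<dots> = 0" using hl that by simp
    finally show ?thesis .
  qed
  have notW: "rot V d p \<notin> W V E d p"
  proof
    assume "rot V d p \<in> W V E d p"
    then obtain F c where F: "finite F" "F \<subseteq> W1 V E d p \<union> W2 V E d p"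
      "\<forall>v k. rot V d p v k = (\<Sum>y\<in>F. c y * y v k)" unfolding W_def cspan_def by blast
    define F1 where "F1 = F \<inter> W1 V E d p"
    define q where "q v k = (\<Sum>y\<in>F1. c y * y v k)" for v k
    have fF1: "finite F1" using F(1) by (simp add: F1_def)
    have qm: "q \<in> inf_motions V E d p"
    proof -
      have "F1 \<subseteq> inf_motions V E d p" by (auto simp: F1_def W1_def)
      from lincomb_motion[OF fF1 this, of c] show ?thesis by (simp add: q_def[abs_def])
    qed
    have qd: "q v (d-1) = 0" for v unfolding q_def F1_def by (auto simp: W1_def intro!: sum.neutral)
    have q0: "q v 0 = - p v (d-1)" if v: "v \<in> V" for v
    proof -
      have "rot V d p v 0 = (\<Sum>y\<in>F - F1. c y * y v 0) + q v 0"
        unfolding F(3)[rule_format] q_def by (rule sum.subset_diff) (use F(1) in \<open>auto simp: F1_def\<close>)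
      moreover have "(\<Sum>y\<in>F - F1. c y * y v 0) = 0"
        using F(2) by (intro sum.neutral) (auto simp: F1_def W2_def)
      ultimately show ?thesis using v by (simp add: rot_def)
    qed
    have kern: "(\<Sum>v\<in>V. \<Sum>j<d. rig_entry p e v j * q v j) = 0" if "e \<in> E" for e
      using qm that by (simp add: inf_motions_def)
    have "0 = (\<Sum>e\<in>E. lamc e * (\<Sum>v\<in>V. \<Sum>j<d. rig_entry p e v j * q v j))"
      using kern by simp
    also have "\<dots> = (\<Sum>v\<in>V. \<Sum>j<d. q v j * L v j)"
      unfolding L_def by (simp add: sum_distrib_left sum.swap[of _ E] algebra_simps)
    also have "\<dots> = (\<Sum>v\<in>V. q v 0 * L v 0)"
    proof (rule sum.cong[OF refl])
      fix v assume v: "v \<in> V"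
      have "(\<Sum>j<d. q v j * L v j) = (\<Sum>j\<in>{0}. q v j * L v j)"
      proof (rule sum.mono_neutral_right)
        show "\<forall>j\<in>{..<d} - {0}. q v j * L v j = 0"
        proof
          fix j assume j: "j \<in> {..<d} - {0}"
          show "q v j * L v j = 0"
          proof (cases "j = d - 1")
            case True then show ?thesis using qd by simp
          next
            case False then have "j \<le> d - 2" "1 \<le> j" using j by auto
            then show ?thesis using Lmid[OF v, of j] by simp
          qed
        qed
      qed (use d3 in auto)
      then show "(\<Sum>j<d. q v j * L v j) = q v 0 * L v 0" by simp
    qed
    also have "\<dots> = - Sf x3" unfolding Sfp by (simp add: q0 sum_negf)
    finally show False using Sf3 by simp
  qed
  have rm: "rot V d p \<in> inf_motions V E d p" by (rule rot_motion[OF G d3])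
  show ?thesis
    using gen rm notW W_sub[of V E d p] by blast
qed

end
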